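(* Let $0 \le \tilde{p} \leq p \le 1$. Consider $\mathrm{USD}_p$ in configuration $\mathbf{x}(t)$ and $\mathrm{USD}_{\tilde{p}}$ in configuration $\tilde{\mathbf{x}}(t)$ with $\mathbf{x}(t) \succeq_C \tilde{\mathbf{x}}(t)$. Then there exists a bijection $b: [n]^2\times(0,1] \to [n]^2\times(0,1]$ between the random choices of the two schedulers such that, if $\mathrm{USD}_p$ performs its interaction with random choice $\omega$ and $\mathrm{USD}_{\tilde{p}}$ with random choice $b(\omega)$, then $\mathbf{x}(t+1) \succeq_C \tilde{\mathbf{x}}(t+1)$.
   Context: Population protocol with $n$ agents labeled $1,\dots,n$, each in a state from $Q=\{1,2,\bot\}$ (Opinion 1, Opinion 2, undecided). In each interaction the scheduler draws $(i,j,r) \in [n]^2\times(0,1]$ uniformly at random: $i$ is the initiator, $j$ the responder, and only the initiator changes state. In $\mathrm{USD}_p$: if the initiator is $2$ and the responder $1$, the initiator becomes $\bot$; if the initiator is $1$ and the responder $2$, the initiator stays $1$ if $r\le p$ and becomes $\bot$ otherwise; if the initiator is $\bot$, it adopts the responder's state; otherwise nothing changes. A configuration $(x_1,x_2,u)$ counts the agents in states $1,2,\bot$. The states are ordered by $1 \succeq_Q \bot \succeq_Q 2$, and for configurations $\mathbf{x}=(x_1,x_2,u)$, $\tilde{\mathbf{x}}=(\tilde{x}_1,\tilde{x}_2,\tilde{u})$ we write $\mathbf{x}\succeq_C\tilde{\mathbf{x}}$ if $x_1\ge\tilde{x}_1$ and $x_1+u\ge\tilde{x}_1+\tilde{u}$.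 At time $t$ the agents in each process are labeled so that their states are sorted: $q_i(t)\succeq_Q q_{i+1}(t)$ and $\tilde{q}_i(t)\succeq_Q\tilde{q}_{i+1}(t)$ for all $i\in[n-1]$. *)

theory Defs
  imports Complex_Main
begin

datatype state = Op1 | Op2 | Und

text \<open>Configuration: (x1, x2, u) = numbers of agents in states 1, 2, undecided.\<close>
type_synonym config = "nat \<times> nat \<times> nat"

definition valid_config :: "nat \<Rightarrow> config \<Rightarrow> bool" where
  "valid_config n c = (case c of (x1, x2, u) \<Rightarrow> x1 + x2 + u = n)"

definition config_ge :: "config \<Rightarrow> config \<Rightarrow> bool" where
  "config_ge c c' = (case c of (x1, x2, u) \<Rightarrow> case c' of (y1, y2, v) \<Rightarrow>
      x1 \<ge> y1 \<and> x1 + u \<ge> y1 + v)"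

text \<open>State of agent i (labels 1..n) when agents are sorted so that
  q_i \<succeq>_Q q_{i+1} with 1 \<succeq>_Q undecided \<succeq>_Q 2.\<close>
definition agent_state :: "config \<Rightarrow> nat \<Rightarrow> state" where
  "agent_state c i = (case c of (x1, x2, u) \<Rightarrow>
      if i \<le> x1 then Op1 else if i \<le> x1 + u then Und else Op2)"

definition usd_trans :: "real \<Rightarrow> state \<Rightarrow> state \<Rightarrow> real \<Rightarrow> state" where
  "usd_trans p qi qj r =
     (if qi = Op2 \<and> qj = Op1 then Und
      else if qi = Op1 \<and> qj = Op2 then (if r \<le> p then Op1 else Und)
      else if qi = Und then qj
      else qi)"

definition count_vec :: "state \<Rightarrow> config" where
  "count_vec q = (case q of Op1 \<Rightarrow> (1, 0, 0) | Op2 \<Rightarrow> (0, 1, 0) | Und \<Rightarrow> (0, 0, 1))"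

definition usd_step :: "real \<Rightarrow> config \<Rightarrow> nat \<times> nat \<times> real \<Rightarrow> config" where
  "usd_step p c \<omega> = (case \<omega> of (i, j, r) \<Rightarrow>
     let qi = agent_state c i; qj = agent_state c j; q' = usd_trans p qi qj r;
         (x1, x2, u) = c; (a1, a2, a3) = count_vec qi; (b1, b2, b3) = count_vec q'
     in (x1 - a1 + b1, x2 - a2 + b2, u - a3 + b3))"

definition choices :: "nat \<Rightarrow> (nat \<times> nat \<times> real) set" where
  "choices n = {1..n} \<times> {1..n} \<times> {0<..1}"

end

theory Submission
  imports Defs
begin

lemma step_mono:
  assumes "pt \<le> p" and "x1 + x2 + u = n" and "y1 + y2 + v = n"
    and "y1 \<le> x1" and "y1 + v \<le> x1 + u"
    and "1 \<le> i" "i \<le> n" "1 \<le> j" "j \<le> n"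
  shows "config_ge (usd_step p (x1,x2,u) (i,j,r)) (usd_step pt (y1,y2,v) (i,j,r))"
  using assms
  unfolding config_ge_def usd_step_def agent_state_def usd_trans_def count_vec_def Let_def
  by (simp split: if_splits) linarith?

theorem lemma5:
  fixes n :: nat and p pt :: real and c ct :: config
  assumes "0 \<le> pt" and "pt \<le> p" and "p \<le> 1"
    and "valid_config n c" and "valid_config n ct"
    and "config_ge c ct"
  shows "\<exists>b. bij_betw b (choices n) (choices n) \<and>
           (\<forall>\<omega>\<in>choices n. config_ge (usd_step p c \<omega>) (usd_step pt ct (b \<omega>)))"
proof (intro exI[of _ id] conjI ballI)
  show "bij_betw id (choices n) (choices n)" by simp
next
  fix \<omega> assume w: "\<omega> \<in> choices n"
  obtain i j r where o: "\<omega> = (i,j,r)" by (cases \<omega>) auto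
  obtain x1 x2 u where c: "c = (x1,x2,u)" by (cases c) auto
  obtain y1 y2 v where ct: "ct = (y1,y2,v)" by (cases ct) auto
  show "config_ge (usd_step p c \<omega>) (usd_step pt ct (id \<omega>))"
    unfolding o c ct id_def
    apply (rule step_mono)
    using assms w unfolding o c ct valid_config_def config_ge_def choices_def by auto
qed

end
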